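(* Let $m>1$ and $n>0$ be integers. Then the size of the largest clique in ${\rm SR}(m,n)$ is $\max(m,n+1)$.
   Context: ${\rm SR}(m,n)$ is the graph whose vertices are the vectors in $\{0,1,2,\dots\}^m$ with coordinate sum $n$, two vertices being adjacent when they differ in precisely two coordinate positions. *)

theory Defs
  imports Main
begin

text \<open>Vertices of SR(m,n): vectors in {0,1,2,...}^m (coordinates indexed by 0..m-1,
  represented as functions nat => nat vanishing outside {..<m}) with coordinate sum n.\<close>
definition SR_vertices :: "nat \<Rightarrow> nat \<Rightarrow> (nat \<Rightarrow> nat) set" where
  "SR_vertices m n = {x. (\<forall>i\<ge>m. x i = 0) \<and> (\<Sum>i<m. x i) = n}"

definition SR_adj :: "nat \<Rightarrow> (nat \<Rightarrow> nat) \<Rightarrow> (nat \<Rightarrow> nat) \<Rightarrow> bool" where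
  "SR_adj m x y \<longleftrightarrow> card {i. i < m \<and> x i \<noteq> y i} = 2"

definition SR_clique :: "nat \<Rightarrow> nat \<Rightarrow> (nat \<Rightarrow> nat) set \<Rightarrow> bool" where
  "SR_clique m n C \<longleftrightarrow> C \<subseteq> SR_vertices m n \<and>
     (\<forall>x\<in>C. \<forall>y\<in>C. x \<noteq> y \<longrightarrow> SR_adj m x y)"

definition SR_clique_number :: "nat \<Rightarrow> nat \<Rightarrow> nat" where
  "SR_clique_number m n = Max (card ` {C. SR_clique m n C})"

end

theory Submission
  imports Defs
begin

lemma SR_finite: "finite (SR_vertices m n)"
proof -
  have "SR_vertices m n \<subseteq> {f. \<forall>x. (x \<in> {..<m} \<longrightarrow> f x \<in> {0..n}) \<and> (x \<notin> {..<m} \<longrightarrow> f x = 0)}"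
  proof
    fix f assume f: "f \<in> SR_vertices m n"
    have "f i \<le> n" if "i < m" for i
    proof -
      have "f i \<le> (\<Sum>l<m. f l)" using that by (intro member_le_sum) auto
      thus ?thesis using f by (simp add: SR_vertices_def)
    qed
    thus "f \<in> {f. \<forall>x. (x \<in> {..<m} \<longrightarrow> f x \<in> {0..n}) \<and> (x \<notin> {..<m} \<longrightarrow> f x = 0)}"
      using f by (auto simp: SR_vertices_def)
  qed
  thus ?thesis by (rule finite_subset) (rule finite_set_of_finite_funs, auto)
qed

lemma coord_le: "y \<in> SR_vertices m n \<Longrightarrow> y i \<le> n"
proof (cases "i < m")
  case True
  assume y: "y \<in> SR_vertices m n"
  have "y i \<le> (\<Sum>l<m. y l)" using True by (intro member_le_sum) auto
  thus ?thesis using y by (simp add: SR_vertices_def)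
next
  case False
  assume y: "y \<in> SR_vertices m n"
  thus ?thesis using False by (simp add: SR_vertices_def)
qed

lemma vec_eq: "x \<in> SR_vertices m n \<Longrightarrow> y \<in> SR_vertices m n \<Longrightarrow> (\<forall>l<m. x l = y l) \<Longrightarrow> x = y"
  unfolding SR_vertices_def by (auto intro!: ext) (metis not_le)

lemma sum_two: "i<(m::nat) \<Longrightarrow> j<m \<Longrightarrow> i\<noteq>j \<Longrightarrow> (\<Sum>l<m. f l) = f i + f j + (\<Sum>l\<in>{..<m}-{i,j}. f l)"
proof -
  assume a: "i<m" "j<m" "i\<noteq>j"
  have "(\<Sum>l<m. f l) = f i + (\<Sum>l\<in>{..<m}-{i}. f l)" using a by (intro sum.remove) auto
  also have "(\<Sum>l\<in>{..<m}-{i}. f l) = f j + (\<Sum>l\<in>{..<m}-{i}-{j}. f l)" using a by (subst sum.remove[of _ j]) auto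
  also have "{..<m}-{i}-{j} = {..<m}-{i,j}" by auto
  finally show ?thesis by (simp add: add.assoc)
qed

lemma balance:
  assumes "x \<in> SR_vertices m n" "y \<in> SR_vertices m n" "i<m" "j<m" "i\<noteq>j"
    "\<forall>l<m. l\<noteq>i \<and> l\<noteq>j \<longrightarrow> x l = y l"
  shows "x i + x j = y i + y j"
proof -
  have "(\<Sum>l\<in>{..<m}-{i,j}. x l) = (\<Sum>l\<in>{..<m}-{i,j}. y l)"
    using assms(6) by (intro sum.cong) auto
  moreover have "(\<Sum>l<m. x l) = n" "(\<Sum>l<m. y l) = n" using assms(1,2) by (auto simp: SR_vertices_def)
  ultimately show ?thesis using sum_two[OF assms(3-5), of x] sum_two[OF assms(3-5), of y] by simp
qed


definition D :: "nat \<Rightarrow> (nat \<Rightarrow> nat) \<Rightarrow> (nat \<Rightarrow> nat) \<Rightarrow> nat set" where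
  "D m x y = {l. l<m \<and> x l \<noteq> y l}"

lemma D_sym: "D m x y = D m y x" unfolding D_def by auto

lemma D_card: "SR_clique m n C \<Longrightarrow> x \<in> C \<Longrightarrow> y \<in> C \<Longrightarrow> x \<noteq> y \<Longrightarrow> card (D m x y) = 2"
  unfolding SR_clique_def SR_adj_def D_def by auto

lemma agree:
  assumes cl: "SR_clique m n C" and xC: "x \<in> C" and wC: "w \<in> C" and uC: "u \<in> C"
    and Dw: "D m x w = {c,d}" and Du: "D m x u = {c,e}" and dist: "c\<noteq>d" "c\<noteq>e" "d\<noteq>e"
  shows "w c = u c"
proof -
  have wu: "w \<noteq> u" using Dw Du dist by (metis doubleton_eq_iff)
  have "card (D m w u) = 2" using D_card[OF cl wC uC wu] .
  have dm: "d \<in> D m x w" and em: "e \<in> D m x u" and cm: "c \<in> D m x w"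
    and dn: "d \<notin> D m x u" and en: "e \<notin> D m x w" using Dw Du dist by auto
  have "d \<in> D m w u" using dm dn unfolding D_def by auto
  moreover have "e \<in> D m w u" using em en unfolding D_def by auto
  moreover have "c < m" using cm unfolding D_def by auto
  moreover obtain a b where "D m w u = {a,b}" using \<open>card (D m w u) = 2\<close>
    unfolding card_2_iff by blast
  ultimately have "D m w u = {d,e}" using dist(3) by auto
  thus ?thesis using \<open>c<m\<close> dist unfolding D_def by (auto simp: set_eq_iff)
qed


lemma D_out: "D m x y = S \<Longrightarrow> l < m \<Longrightarrow> l \<notin> S \<Longrightarrow> y l = x l"
  unfolding D_def by auto

lemma D_in: "D m x y = S \<Longrightarrow> l \<in> S \<Longrightarrow> l < m \<and> x l \<noteq> y l"
  unfolding D_def by auto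

lemma triangle:
  assumes cl: "SR_clique m n C" and xC: "x \<in> C" and yC: "y \<in> C" and zC: "z \<in> C" and wC: "w \<in> C"
    and Dy: "D m x y = {i,j}" and Dz: "D m x z = {j,k}" and Dw: "D m x w = {i,k}"
    and dist: "i\<noteq>j" "j\<noteq>k" "i\<noteq>k"
  shows False
proof -
  have V: "C \<subseteq> SR_vertices m n" using cl by (simp add: SR_clique_def)
  have im: "i<m" and jm: "j<m" and km: "k<m" using D_in[OF Dy] D_in[OF Dz] by auto
  have yj: "x j \<noteq> y j" using D_in[OF Dy] by auto
  have e1: "y j = z j" using agree[OF cl xC yC zC, of j i k] Dy Dz dist by (simp add: insert_commute)
  have e2: "y i = w i" using agree[OF cl xC yC wC, of i j k] Dy Dw dist by simp
  have e3: "z k = w k" using agree[OF cl xC zC wC, of k j i] Dz Dw dist by (simp add: insert_commute)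
  have b1: "x i + x j = y i + y j"
    using balance[of x m n y i j] V xC yC im jm dist D_out[OF Dy] by auto
  have b2: "x j + x k = z j + z k"
    using balance[of x m n z j k] V xC zC jm km dist D_out[OF Dz] by auto
  have b3: "x i + x k = w i + w k"
    using balance[of x m n w i k] V xC wC im km dist D_out[OF Dw] by auto
  from b1 b2 b3 e1 e2 e3 have "x j = y j" by linarith
  with yj show False by simp
qed

lemma intersect:
  assumes cl: "SR_clique m n C" and xC: "x \<in> C" and yC: "y \<in> C" and zC: "z \<in> C"
    and xy: "x \<noteq> y" and xz: "x \<noteq> z"
  shows "D m x y \<inter> D m x z \<noteq> {}"
proof
  assume dis: "D m x y \<inter> D m x z = {}"
  have c1: "card (D m x y) = 2" and c2: "card (D m x z) = 2" using D_card[OF cl] assms by auto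
  show False
  proof (cases "y = z")
    case True thus False using dis c1 by auto
  next
    case False
    have sub: "D m x y \<union> D m x z \<subseteq> D m y z" using dis unfolding D_def by auto
    have "card (D m x y \<union> D m x z) = 4" using dis c1 c2
      by (subst card_Un_disjoint) (auto intro: card_ge_0_finite)
    moreover have "finite (D m y z)" unfolding D_def by auto
    ultimately have "card (D m y z) \<ge> 4" using sub card_mono by metis
    thus False using D_card[OF cl yC zC False] by simp
  qed
qed

lemma line_bound:
  assumes cl: "SR_clique m n C" and xC: "x \<in> C" and ij: "i<m" "j<m" "i\<noteq>j"
    and ag: "\<forall>y\<in>C. \<forall>l<m. l\<noteq>i \<and> l\<noteq>j \<longrightarrow> y l = x l"
  shows "card C \<le> n+1"
proof -
  have V: "C \<subseteq> SR_vertices m n" using cl by (simp add: SR_clique_def)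
  have inj: "inj_on (\<lambda>y. y i) C"
  proof
    fix y z assume yC: "y \<in> C" and zC: "z \<in> C" and e: "y i = z i"
    have ay: "\<forall>l<m. l\<noteq>i \<and> l\<noteq>j \<longrightarrow> x l = y l" using ag yC by simp
    have az: "\<forall>l<m. l\<noteq>i \<and> l\<noteq>j \<longrightarrow> x l = z l" using ag zC by simp
    have xV: "x \<in> SR_vertices m n" and yV: "y \<in> SR_vertices m n" and zV: "z \<in> SR_vertices m n"
      using V xC yC zC by auto
    have "x i + x j = y i + y j" by (rule balance[OF xV yV ij ay])
    moreover have "x i + x j = z i + z j" by (rule balance[OF xV zV ij az])
    ultimately have yj: "y j = z j" using e by simp
    have "\<forall>l<m. y l = z l"
    proof (intro allI impI)
      fix l assume "l < m"
      show "y l = z l"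
      proof (cases "l = i \<or> l = j")
        case True thus ?thesis using e yj by auto
      next
        case False thus ?thesis using ay az \<open>l<m\<close> by simp
      qed
    qed
    thus "y = z" using vec_eq yV zV by blast
  qed
  have "(\<lambda>y. y i) ` C \<subseteq> {0..n}" using coord_le V by fastforce
  hence "card ((\<lambda>y. y i) ` C) \<le> card {0..n}" by (intro card_mono) auto
  thus ?thesis using card_image[OF inj] by simp
qed

lemma star_bound:
  assumes cl: "SR_clique m n C" and xC: "x \<in> C" and y0C: "y0 \<in> C" and zC: "z \<in> C"
    and Dy: "D m x y0 = {c,a}" and Dz: "D m x z = {c,b}" and dist: "c\<noteq>a" "c\<noteq>b" "a\<noteq>b"
  shows "card C \<le> m"
proof -
  have V: "C \<subseteq> SR_vertices m n" using cl by (simp add: SR_clique_def)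
  have fin: "finite C" using V SR_finite finite_subset by blast
  have y0x: "y0 \<noteq> x" using Dy unfolding D_def by auto
  have zx: "z \<noteq> x" using Dz unfolding D_def by auto
  have cm: "c < m" using D_in[OF Dy] by auto
  have cin: "c \<in> D m x w" if wC: "w \<in> C" and wx: "w \<noteq> x" for w
  proof (rule ccontr)
    assume nc: "c \<notin> D m x w"
    have "D m x y0 \<inter> D m x w \<noteq> {}" using intersect[OF cl xC y0C wC] y0x wx by auto
    hence aw: "a \<in> D m x w" using Dy nc by auto
    have "D m x z \<inter> D m x w \<noteq> {}" using intersect[OF cl xC zC wC] zx wx by auto
    hence bw: "b \<in> D m x w" using Dz nc by auto
    obtain p q where pq: "D m x w = {p,q}" using D_card[OF cl xC wC] wx card_2_iff by metis
    have Dw: "D m x w = {a,b}" using pq aw bw dist by auto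
    show False using triangle[OF cl xC y0C zC wC, of a c b] Dy Dz Dw dist by (simp add: insert_commute)
  qed
  define g where "g w = the_elem (D m x w - {c})" for w
  have gD: "D m x w = {c, g w} \<and> g w \<noteq> c \<and> g w < m" if wC: "w \<in> C" and wx: "w \<noteq> x" for w
  proof -
    obtain p q where pq: "D m x w = {p,q}" "p \<noteq> q" using D_card[OF cl xC wC] wx card_2_iff by metis
    have "c \<in> {p,q}" using cin[OF wC wx] pq by simp
    then obtain d where d: "D m x w = {c,d}" "d \<noteq> c" using pq by (auto simp: insert_commute)
    hence "D m x w - {c} = {d}" by auto
    hence "g w = d" unfolding g_def by simp
    thus ?thesis using d D_in[OF d(1)] by auto
  qed
  have gy0: "g y0 = a" using gD[OF y0C y0x] Dy dist by (auto simp: doubleton_eq_iff)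
  have gz: "g z = b" using gD[OF zC zx] Dz dist by (auto simp: doubleton_eq_iff)
  have inj: "inj_on g (C - {x})"
  proof
    fix w w' assume wC': "w \<in> C - {x}" and w'C': "w' \<in> C - {x}" and e: "g w = g w'"
    have wC: "w \<in> C" and wx: "w \<noteq> x" and w'C: "w' \<in> C" and w'x: "w' \<noteq> x" using wC' w'C' by auto
    define d where "d = g w"
    have Dw: "D m x w = {c,d}" and dc: "d \<noteq> c" and dm: "d < m" using gD[OF wC wx] d_def by auto
    have Dw': "D m x w' = {c,d}" using gD[OF w'C w'x] d_def e by auto
    obtain u where uC: "u \<in> C" and ux: "u \<noteq> x" and ud: "g u \<noteq> d"
    proof (cases "a = d")
      case True thus ?thesis using that[OF zC zx] gz dist by auto
    next
      case False thus ?thesis using that[OF y0C y0x] gy0 by auto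
    qed
    have Du: "D m x u = {c, g u}" and uc: "g u \<noteq> c" using gD[OF uC ux] by auto
    have e1: "w c = u c" by (rule agree[OF cl xC wC uC Dw Du dc[symmetric] uc[symmetric] ud[symmetric]])
    have e2: "w' c = u c" by (rule agree[OF cl xC w'C uC Dw' Du dc[symmetric] uc[symmetric] ud[symmetric]])
    have xV: "x \<in> SR_vertices m n" and yV: "w \<in> SR_vertices m n" and zV: "w' \<in> SR_vertices m n"
      using V xC wC w'C by auto
    have ay: "\<forall>l<m. l\<noteq>c \<and> l\<noteq>d \<longrightarrow> x l = w l" using D_out[OF Dw] by auto
    have az: "\<forall>l<m. l\<noteq>c \<and> l\<noteq>d \<longrightarrow> x l = w' l" using D_out[OF Dw'] by auto
    have "x c + x d = w c + w d" by (rule balance[OF xV yV cm dm dc[symmetric] ay])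
    moreover have "x c + x d = w' c + w' d" by (rule balance[OF xV zV cm dm dc[symmetric] az])
    ultimately have yj: "w d = w' d" using e1 e2 by simp
    have "\<forall>l<m. w l = w' l"
    proof (intro allI impI)
      fix l assume "l < m"
      show "w l = w' l"
      proof (cases "l = c \<or> l = d")
        case True thus ?thesis using e1 e2 yj by auto
      next
        case False thus ?thesis using ay az \<open>l<m\<close> by simp
      qed
    qed
    thus "w = w'" using vec_eq yV zV by blast
  qed
  have "g ` (C - {x}) \<subseteq> {..<m} - {c}" using gD by auto
  hence "card (g ` (C - {x})) \<le> card ({..<m} - {c})" by (intro card_mono) auto
  hence "card (C - {x}) \<le> m - 1" using card_image[OF inj] cm by simp
  moreover have "card C = card (C - {x}) + 1" using fin xC
    by (metis card_Suc_Diff1 Suc_eq_plus1)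
  ultimately show ?thesis using cm by linarith
qed

lemma pick:
  assumes "{p,q} \<inter> {i,j} \<noteq> {}" "{p,q} \<noteq> {i,j}" "p \<noteq> q" "i \<noteq> j"
  shows "\<exists>c a b. {i,j} = {c,a} \<and> {p,q} = {c,(b::'a)} \<and> c\<noteq>a \<and> c\<noteq>b \<and> a\<noteq>b"
proof -
  have "p = i \<or> p = j \<or> q = i \<or> q = j" using assms(1) by auto
  moreover
  { assume h: "p = i" hence "q \<noteq> j" using assms(2) by auto
    hence ?thesis using h assms(3,4) by (intro exI[where x=i] exI[where x=j] exI[where x=q]) auto }
  moreover
  { assume h: "p = j" hence "q \<noteq> i" using assms(2) by auto
    hence ?thesis using h assms(3,4) by (intro exI[where x=j] exI[where x=i] exI[where x=q]) auto }
  moreover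
  { assume h: "q = i" hence "p \<noteq> j" using assms(2) by auto
    hence ?thesis using h assms(3,4) by (intro exI[where x=i] exI[where x=j] exI[where x=p]) auto }
  moreover
  { assume h: "q = j" hence "p \<noteq> i" using assms(2) by auto
    hence ?thesis using h assms(3,4) by (intro exI[where x=j] exI[where x=i] exI[where x=p]) auto }
  ultimately show ?thesis by blast
qed

lemma upper:
  assumes cl: "SR_clique m n C" and m1: "m > 1"
  shows "card C \<le> max m (n+1)"
proof (cases "\<exists>x\<in>C. \<exists>y\<in>C. x \<noteq> y")
  case False
  hence "C = {} \<or> (\<exists>x. C = {x})" by blast
  thus ?thesis using m1 by auto
next
  case True
  then obtain x y0 where xC: "x \<in> C" and y0C: "y0 \<in> C" and y0x: "y0 \<noteq> x" by blast
  obtain i j where Dy: "D m x y0 = {i,j}" and ij: "i \<noteq> j"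
    using D_card[OF cl xC y0C] y0x card_2_iff by metis
  have im: "i < m" and jm: "j < m" using D_in[OF Dy] by auto
  show ?thesis
  proof (cases "\<forall>z\<in>C - {x}. D m x z = {i,j}")
    case True
    have "\<forall>z\<in>C. \<forall>l<m. l\<noteq>i \<and> l\<noteq>j \<longrightarrow> z l = x l"
    proof (intro ballI allI impI)
      fix z l assume zC: "z \<in> C" and "l < m" "l\<noteq>i \<and> l\<noteq>j"
      show "z l = x l"
      proof (cases "z = x")
        case False
        hence "D m x z = {i,j}" using True zC by auto
        thus ?thesis using D_out \<open>l<m\<close> \<open>l\<noteq>i \<and> l\<noteq>j\<close> by blast
      qed simp
    qed
    from line_bound[OF cl xC im jm ij this] show ?thesis by simp
  next
    case False
    then obtain z where zC: "z \<in> C" and zx: "z \<noteq> x" and Dzn: "D m x z \<noteq> {i,j}" by auto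
    obtain p q where Dz: "D m x z = {p,q}" and pq: "p \<noteq> q"
      using D_card[OF cl xC zC] zx card_2_iff by metis
    have "D m x y0 \<inter> D m x z \<noteq> {}" using intersect[OF cl xC y0C zC] y0x zx by auto
    hence "\<exists>c a b. D m x y0 = {c,a} \<and> D m x z = {c,b} \<and> c\<noteq>a \<and> c\<noteq>b \<and> a\<noteq>b"
    proof -
      have h1: "{p,q} \<inter> {i,j} \<noteq> {}" using \<open>D m x y0 \<inter> D m x z \<noteq> {}\<close> Dy Dz by (simp add: Int_commute)
      have h2: "{p,q} \<noteq> {i,j}" using Dzn Dz by simp
      show ?thesis using pick[OF h1 h2 pq ij] unfolding Dy Dz .
    qed
    then obtain c a b where "D m x y0 = {c,a}" "D m x z = {c,b}" "c\<noteq>a" "c\<noteq>b" "a\<noteq>b" by blast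
    from star_bound[OF cl xC y0C zC this] show ?thesis by simp
  qed
qed

lemma star_clique:
  assumes "n > 0"
  shows "SR_clique m n ((\<lambda>i. \<lambda>l. if l = i then n else 0) ` {..<m})"
    and "card ((\<lambda>i. \<lambda>l::nat. if l = i then n else 0) ` {..<m}) = m"
proof -
  let ?f = "\<lambda>i. \<lambda>l::nat. if l = i then n else 0"
  have inj: "inj_on ?f {..<m}"
  proof
    fix i j assume "i \<in> {..<m}" "j \<in> {..<m}" "?f i = ?f j"
    from this(3) have "?f i i = ?f j i" by (rule fun_cong)
    thus "i = j" using assms by (simp split: if_splits)
  qed
  show "card (?f ` {..<m}) = m" using card_image[OF inj] by simp
  have V: "?f i \<in> SR_vertices m n" if "i < m" for i
    using that by (simp add: SR_vertices_def)
  have A: "SR_adj m (?f i) (?f j)" if "i<m" "j<m" "i\<noteq>j" for i j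
  proof -
    have "{l. l < m \<and> ?f i l \<noteq> ?f j l} = {i,j}" using that assms by auto
    thus ?thesis using that unfolding SR_adj_def by simp
  qed
  show "SR_clique m n (?f ` {..<m})"
    unfolding SR_clique_def using V A by auto
qed

lemma line_clique:
  assumes "m > 1"
  shows "SR_clique m n ((\<lambda>k. \<lambda>l. if l = 0 then k else if l = 1 then n - k else 0) ` {0..n})"
    and "card ((\<lambda>k. \<lambda>l::nat. if l = 0 then k else if l = 1 then n - k else 0) ` {0..n}) = n+1"
proof -
  let ?f = "\<lambda>k. \<lambda>l::nat. if l = 0 then k else if l = 1 then n - k else 0"
  have inj: "inj_on ?f {0..n}"
  proof
    fix i j assume "i \<in> {0..n}" "j \<in> {0..n}" "?f i = ?f j"
    from this(3) have "?f i 0 = ?f j 0" by (rule fun_cong)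
    thus "i = j" by simp
  qed
  show "card (?f ` {0..n}) = n+1" using card_image[OF inj] by simp
  have V: "?f k \<in> SR_vertices m n" if "k \<le> n" for k
  proof -
    have "(\<Sum>l<m. ?f k l) = ?f k 0 + ?f k 1 + (\<Sum>l\<in>{..<m}-{0,1}. ?f k l)"
      using assms by (intro sum_two) auto
    also have "(\<Sum>l\<in>{..<m}-{0,1}. ?f k l) = 0" by (intro sum.neutral) auto
    finally show ?thesis using that assms by (simp add: SR_vertices_def)
  qed
  have A: "SR_adj m (?f i) (?f j)" if "i\<le>n" "j\<le>n" "?f i \<noteq> ?f j" for i j
  proof -
    have "i \<noteq> j" using that(3) by auto
    have "{l. l < m \<and> ?f i l \<noteq> ?f j l} = {0,1}" using that \<open>i \<noteq> j\<close> assms by auto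
    thus ?thesis unfolding SR_adj_def by simp
  qed
  show "SR_clique m n (?f ` {0..n})"
    unfolding SR_clique_def using V A by auto
qed

theorem proposition10:
  fixes m n :: nat
  assumes "m > 1" and "n > 0"
  shows "SR_clique_number m n = max m (n + 1)"
proof -
  let ?S = "card ` {C. SR_clique m n C}"
  have "{C. SR_clique m n C} \<subseteq> Pow (SR_vertices m n)" unfolding SR_clique_def by auto
  hence fin: "finite ?S" using SR_finite by (meson finite_Pow_iff finite_imageI finite_subset)
  have le: "\<forall>k\<in>?S. k \<le> max m (n+1)" using upper assms(1) by auto
  have m1: "n+1 \<in> ?S" using line_clique[OF assms(1), of n]
    by (metis (mono_tags, lifting) image_eqI mem_Collect_eq)
  have m2: "m \<in> ?S" using star_clique[OF assms(2), of m]
    by (metis (mono_tags, lifting) image_eqI mem_Collect_eq)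
  have mem: "max m (n+1) \<in> ?S" using m1 m2 by (simp add: max_def)
  show ?thesis unfolding SR_clique_number_def
    by (intro Max_eqI fin) (use le mem in auto)
qed


end
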